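(* For every integer $n\ge 6$ and every integer $t$ with $1\le t\le n-3$, $\mathrm{wdim}_{2n-2t-1}(K_n\times K_n)=n^2-tn-\left\lfloor \frac{n}{t+1}\right\rfloor$.
   Context: $K_n\times K_n$ is the direct product of two complete graphs on $n$ vertices: vertex set $[n]\times[n]$ with $[n]=\{1,\dots,n\}$, and $(i,j)$ adjacent to $(i',j')$ iff $i\ne i'$ and $j\ne j'$. For a connected graph $G$ with distance $d_G$, vertices $x,y,z$ and $S\subseteq V(G)$, let $\Delta_z(x,y)=|d_G(x,z)-d_G(y,z)|$ and $\Delta_S(x,y)=\sum_{z\in S}\Delta_z(x,y)$. A set $S$ is a weak $k$-resolving set if $\Delta_S(x,y)\ge k$ for all distinct $x,y\in V(G)$, and $\mathrm{wdim}_k(G)$ is the minimum cardinality of a weak $k$-resolving set of $G$. *)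

theory Defs
  imports Main
begin

fun walk :: "'a set \<Rightarrow> ('a \<Rightarrow> 'a \<Rightarrow> bool) \<Rightarrow> nat \<Rightarrow> 'a \<Rightarrow> 'a \<Rightarrow> bool" where
  "walk V adj 0 x y = (x \<in> V \<and> x = y)"
| "walk V adj (Suc k) x y = (x \<in> V \<and> (\<exists>w. adj x w \<and> walk V adj k w y))"

definition gdist :: "'a set \<Rightarrow> ('a \<Rightarrow> 'a \<Rightarrow> bool) \<Rightarrow> 'a \<Rightarrow> 'a \<Rightarrow> nat" where
  "gdist V adj x y = (LEAST k. walk V adj k x y)"

definition connected_graph :: "'a set \<Rightarrow> ('a \<Rightarrow> 'a \<Rightarrow> bool) \<Rightarrow> bool" where
  "connected_graph V adj \<longleftrightarrow> (\<forall>x\<in>V. \<forall>y\<in>V. \<exists>k. walk V adj k x y)"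

definition Delta :: "'a set \<Rightarrow> ('a \<Rightarrow> 'a \<Rightarrow> bool) \<Rightarrow> 'a \<Rightarrow> 'a \<Rightarrow> 'a \<Rightarrow> nat" where
  "Delta V adj z x y = nat \<bar>int (gdist V adj x z) - int (gdist V adj y z)\<bar>"

definition DeltaS :: "'a set \<Rightarrow> ('a \<Rightarrow> 'a \<Rightarrow> bool) \<Rightarrow> 'a set \<Rightarrow> 'a \<Rightarrow> 'a \<Rightarrow> nat" where
  "DeltaS V adj S x y = (\<Sum>z\<in>S. Delta V adj z x y)"

definition weak_k_resolving :: "'a set \<Rightarrow> ('a \<Rightarrow> 'a \<Rightarrow> bool) \<Rightarrow> nat \<Rightarrow> 'a set \<Rightarrow> bool" where
  "weak_k_resolving V adj k S \<longleftrightarrow> S \<subseteq> V \<and>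
     (\<forall>x\<in>V. \<forall>y\<in>V. x \<noteq> y \<longrightarrow> DeltaS V adj S x y \<ge> k)"

definition wdim :: "'a set \<Rightarrow> ('a \<Rightarrow> 'a \<Rightarrow> bool) \<Rightarrow> nat \<Rightarrow> nat" where
  "wdim V adj k = Min (card ` {S. weak_k_resolving V adj k S})"

(* K_n \<times> K_n: vertex set [n]\<times>[n], (i,j) ~ (i',j') iff i\<noteq>i' and j\<noteq>j' *)
definition KK_V :: "nat \<Rightarrow> (nat \<times> nat) set" where
  "KK_V n = {1..n} \<times> {1..n}"

definition KK_adj :: "(nat \<times> nat) \<Rightarrow> (nat \<times> nat) \<Rightarrow> bool" where
  "KK_adj p q \<longleftrightarrow> fst p \<noteq> fst q \<and> snd p \<noteq> snd q"

end

theory Submission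
  imports Defs
begin


definition dd :: "nat \<times> nat \<Rightarrow> nat \<times> nat \<Rightarrow> nat" where
  "dd x z = (if x = z then 0 else if KK_adj x z then 1 else 2)"

lemma ex_other:
  fixes a c n :: nat
  assumes "n \<ge> 3"
  shows "\<exists>p. 1 \<le> p \<and> p \<le> n \<and> p \<noteq> a \<and> p \<noteq> c"
proof -
  have "\<exists>p\<in>{1,2,3::nat}. p \<noteq> a \<and> p \<noteq> c" by auto
  then obtain p where "p \<in> {1,2,3::nat}" "p \<noteq> a" "p \<noteq> c" by blast
  then show ?thesis using assms by (intro exI[of _ p]) auto
qed

lemma walk1: "walk V adj (Suc 0) x y \<longleftrightarrow> x \<in> V \<and> adj x y \<and> y \<in> V"
  by auto

lemma gdist_KK:
  assumes n: "n \<ge> 3" and x: "x \<in> KK_V n" and z: "z \<in> KK_V n"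
  shows "gdist (KK_V n) KK_adj x z = dd x z"
proof -
  consider "x = z" | "x \<noteq> z" "KK_adj x z" | "x \<noteq> z" "\<not> KK_adj x z" by blast
  then show ?thesis
  proof cases
    case 1
    then show ?thesis unfolding gdist_def dd_def using x
      by (intro Least_equality) auto
  next
    case 2
    have "walk (KK_V n) KK_adj (Suc 0) x z" using 2 x z by (cases z) auto
    moreover have "\<And>k. walk (KK_V n) KK_adj k x z \<Longrightarrow> Suc 0 \<le> k"
      using 2 by (case_tac k) auto
    ultimately show ?thesis unfolding gdist_def dd_def using 2
      by (intro Least_equality) auto
  next
    case 3
    obtain a b c e where ab: "x = (a,b)" and ce: "z = (c,e)" by (cases x, cases z) auto
    obtain p where p: "1 \<le> p" "p \<le> n" "p \<noteq> a" "p \<noteq> c" using ex_other[OF n] by blast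
    obtain r where r: "1 \<le> r" "r \<le> n" "r \<noteq> b" "r \<noteq> e" using ex_other[OF n] by blast
    have w: "(p,r) \<in> KK_V n" using p r by (auto simp: KK_V_def)
    have "walk (KK_V n) KK_adj (Suc (Suc 0)) x z"
      using x z w p r ab ce by (auto simp: KK_adj_def)
    moreover have "\<And>k. walk (KK_V n) KK_adj k x z \<Longrightarrow> Suc (Suc 0) \<le> k"
    proof -
      fix k assume "walk (KK_V n) KK_adj k x z"
      then show "Suc (Suc 0) \<le> k" using 3
        by (cases k; cases "k - 1") (auto simp del: walk.simps(2), auto)
    qed
    ultimately have "(LEAST k. walk (KK_V n) KK_adj k x z) = Suc (Suc 0)"
      by (intro Least_equality) auto
    then show ?thesis unfolding gdist_def dd_def using 3 by simp
  qed
qed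

lemma Delta_KK:
  assumes "n \<ge> 3" "x \<in> KK_V n" "y \<in> KK_V n" "z \<in> KK_V n"
  shows "int (Delta (KK_V n) KK_adj z x y) = \<bar>int (dd x z) - int (dd y z)\<bar>"
  using assms by (simp add: Delta_def gdist_KK)

lemma Delta_col:
  assumes "n \<ge> 3" "x \<in> KK_V n" "y \<in> KK_V n" "z \<in> KK_V n"
    and "x = (i,j)" "y = (i',j)" "i \<noteq> i'"
  shows "int (Delta (KK_V n) KK_adj z x y) =
     of_bool (z = x) + of_bool (z = y) + of_bool (fst z = i) + of_bool (fst z = i')"
  using assms by (cases z) (auto simp: Delta_KK dd_def KK_adj_def)

lemma Delta_row:
  assumes "n \<ge> 3" "x \<in> KK_V n" "y \<in> KK_V n" "z \<in> KK_V n"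
    and "x = (i,j)" "y = (i,j')" "j \<noteq> j'"
  shows "int (Delta (KK_V n) KK_adj z x y) =
     of_bool (z = x) + of_bool (z = y) + of_bool (snd z = j) + of_bool (snd z = j')"
  using assms by (cases z) (auto simp: Delta_KK dd_def KK_adj_def)

lemma Delta_gen:
  assumes "n \<ge> 3" "x \<in> KK_V n" "y \<in> KK_V n" "z \<in> KK_V n"
    and "x = (i,j)" "y = (i',j')" "i \<noteq> i'" "j \<noteq> j'"
  shows "int (Delta (KK_V n) KK_adj z x y) =
     of_bool (fst z = i) + of_bool (fst z = i') + of_bool (snd z = j) + of_bool (snd z = j')
     - of_bool (z = x) - of_bool (z = y) - 2 * of_bool (z = (i,j')) - 2 * of_bool (z = (i',j))"
  using assms by (cases z) (auto simp: Delta_KK dd_def KK_adj_def)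



definition rowc :: "(nat \<times> nat) set \<Rightarrow> nat \<Rightarrow> nat" where
  "rowc S i = card (S \<inter> {z. fst z = i})"
definition colc :: "(nat \<times> nat) set \<Rightarrow> nat \<Rightarrow> nat" where
  "colc S j = card (S \<inter> {z. snd z = j})"

lemma finite_KK: "finite (KK_V n)" by (simp add: KK_V_def)

lemma card_single_bool: "finite S \<Longrightarrow> int (card (S \<inter> {z. z = p})) = of_bool (p \<in> S)"
proof -
  assume "finite S"
  have "S \<inter> {z. z = p} = (if p \<in> S then {p} else {})" by auto
  then show ?thesis by simp
qed

lemma DeltaS_int:
  assumes "S \<subseteq> KK_V n"
  shows "int (DeltaS (KK_V n) KK_adj S x y) = (\<Sum>z\<in>S. int (Delta (KK_V n) KK_adj z x y))"
  by (simp add: DeltaS_def)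

lemma DeltaS_col:
  assumes n: "n \<ge> 3" and S: "S \<subseteq> KK_V n" and xy: "x \<in> KK_V n" "y \<in> KK_V n"
    and e: "x = (i,j)" "y = (i',j)" "i \<noteq> i'"
  shows "int (DeltaS (KK_V n) KK_adj S x y) =
     of_bool (x \<in> S) + of_bool (y \<in> S) + int (rowc S i) + int (rowc S i')"
proof -
  have fin: "finite S" using S finite_KK finite_subset by blast
  have "int (DeltaS (KK_V n) KK_adj S x y) =
     (\<Sum>z\<in>S. of_bool (z = x) + of_bool (z = y) + of_bool (fst z = i) + of_bool (fst z = i'))"
    unfolding DeltaS_int[OF S]
    by (rule sum.cong[OF refl], rule Delta_col[OF n xy _ e], use S in blast)
  also have "\<dots> = of_bool (x \<in> S) + of_bool (y \<in> S) + int (rowc S i) + int (rowc S i')"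
    using fin by (simp add: sum.distrib rowc_def card_single_bool)
  finally show ?thesis .
qed

lemma DeltaS_row:
  assumes n: "n \<ge> 3" and S: "S \<subseteq> KK_V n" and xy: "x \<in> KK_V n" "y \<in> KK_V n"
    and e: "x = (i,j)" "y = (i,j')" "j \<noteq> j'"
  shows "int (DeltaS (KK_V n) KK_adj S x y) =
     of_bool (x \<in> S) + of_bool (y \<in> S) + int (colc S j) + int (colc S j')"
proof -
  have fin: "finite S" using S finite_KK finite_subset by blast
  have "int (DeltaS (KK_V n) KK_adj S x y) =
     (\<Sum>z\<in>S. of_bool (z = x) + of_bool (z = y) + of_bool (snd z = j) + of_bool (snd z = j'))"
    unfolding DeltaS_int[OF S]
    by (rule sum.cong[OF refl], rule Delta_row[OF n xy _ e], use S in blast)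
  also have "\<dots> = of_bool (x \<in> S) + of_bool (y \<in> S) + int (colc S j) + int (colc S j')"
    using fin by (simp add: sum.distrib colc_def card_single_bool)
  finally show ?thesis .
qed

lemma DeltaS_gen:
  assumes n: "n \<ge> 3" and S: "S \<subseteq> KK_V n" and xy: "x \<in> KK_V n" "y \<in> KK_V n"
    and e: "x = (i,j)" "y = (i',j')" "i \<noteq> i'" "j \<noteq> j'"
  shows "int (DeltaS (KK_V n) KK_adj S x y) =
     int (rowc S i) + int (rowc S i') + int (colc S j) + int (colc S j')
     - of_bool (x \<in> S) - of_bool (y \<in> S) - 2 * of_bool ((i,j') \<in> S) - 2 * of_bool ((i',j) \<in> S)"
proof -
  have fin: "finite S" using S finite_KK finite_subset by blast
  have "int (DeltaS (KK_V n) KK_adj S x y) =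
     (\<Sum>z\<in>S. of_bool (fst z = i) + of_bool (fst z = i') + of_bool (snd z = j) + of_bool (snd z = j')
     - of_bool (z = x) - of_bool (z = y) - 2 * of_bool (z = (i,j')) - 2 * of_bool (z = (i',j)))"
    unfolding DeltaS_int[OF S]
    by (rule sum.cong[OF refl], rule Delta_gen[OF n xy _ e], use S in blast)
  also have "\<dots> = int (rowc S i) + int (rowc S i') + int (colc S j) + int (colc S j')
     - of_bool (x \<in> S) - of_bool (y \<in> S) - 2 * of_bool ((i,j') \<in> S) - 2 * of_bool ((i',j) \<in> S)"
    using fin by (simp add: sum.distrib sum_subtractf rowc_def colc_def card_single_bool)
  finally show ?thesis .
qed



lemma comb:
  fixes n t :: nat and R :: "nat \<Rightarrow> nat set"
  assumes n6: "n \<ge> 6" and t1: "1 \<le> t" and tn: "t + 3 \<le> n"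
    and Rsub: "\<And>i. i \<in> {1..n} \<Longrightarrow> R i \<subseteq> {1..n}"
    and C: "\<And>i i' j. i \<in> {1..n} \<Longrightarrow> i' \<in> {1..n} \<Longrightarrow> i \<noteq> i' \<Longrightarrow> j \<in> {1..n} \<Longrightarrow>
             card (R i) + card (R i') + of_bool (j \<in> R i) + of_bool (j \<in> R i') \<le> 2*t+3"
  shows "(\<Sum>i\<in>{1..n}. card (R i)) \<le> n*t + n div (t+1)"
proof -
  define I where "I = {1..n}"
  define q where "q = n div (t+1)"
  have finR: "\<And>i. i \<in> I \<Longrightarrow> finite (R i)" using Rsub I_def finite_subset by blast
  have D1: "card (R i) + card (R i') \<le> 2*t+2" if h: "i \<in> I" "i' \<in> I" "i \<noteq> i'" "R i \<noteq> {}" for i i'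
  proof -
    obtain j where j: "j \<in> R i" using h by blast
    have "j \<in> {1..n}" using j Rsub h I_def by blast
    from C[OF _ _ h(3) this] h j show ?thesis unfolding I_def by auto
  qed
  have D2: "card (R i) + card (R i') \<le> 2*t+1" if h: "i \<in> I" "i' \<in> I" "i \<noteq> i'" "R i \<inter> R i' \<noteq> {}" for i i'
  proof -
    obtain j where j: "j \<in> R i" "j \<in> R i'" using h by blast
    have "j \<in> {1..n}" using j Rsub h I_def by blast
    from C[OF _ _ h(3) this] h j show ?thesis unfolding I_def by auto
  qed
  have cardI: "card I = n" by (simp add: I_def)
  show ?thesis
  proof (cases "\<forall>i\<in>I. card (R i) \<le> t+1")
    case True
    define B where "B = {i\<in>I. card (R i) = t+1}"
    have finB: "finite B" by (simp add: B_def I_def)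
    have "(\<Sum>i\<in>I. card (R i)) \<le> (\<Sum>i\<in>I. t + of_bool (i \<in> B))"
      by (rule sum_mono) (use True in \<open>auto simp: B_def\<close>)
    also have "\<dots> = n*t + card B"
      by (simp add: sum.distrib cardI I_def B_def Int_absorb1 Int_def)
    finally have s1: "(\<Sum>i\<in>I. card (R i)) \<le> n*t + card B" .
    have disj: "\<forall>i\<in>B. \<forall>i'\<in>B. i \<noteq> i' \<longrightarrow> R i \<inter> R i' = {}"
    proof (intro ballI impI)
      fix i i' assume "i \<in> B" "i' \<in> B" "i \<noteq> i'"
      then show "R i \<inter> R i' = {}" using D2[of i i'] by (auto simp: B_def)
    qed
    have "card (\<Union>(R ` B)) = (\<Sum>i\<in>B. card (R i))"
      by (rule card_UN_disjoint[OF finB _ disj]) (use finR in \<open>auto simp: B_def\<close>)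
    also have "\<dots> = card B * (t+1)" by (simp add: B_def)
    finally have e: "card (\<Union>(R ` B)) = card B * (t+1)" .
    have "\<Union>(R ` B) \<subseteq> I" using Rsub by (auto simp: B_def I_def)
    then have "card (\<Union>(R ` B)) \<le> n" using cardI card_mono[of I] by (simp add: I_def)
    then have "card B * (t+1) \<le> n" using e by simp
    then have "card B \<le> q" unfolding q_def by (simp add: less_eq_div_iff_mult_less_eq)
    then show ?thesis using s1 I_def q_def by simp
  next
    case False
    then obtain i0 where i0: "i0 \<in> I" "card (R i0) \<ge> t+2" by force
    define M where "M = card (R i0)"
    have ne: "R i0 \<noteq> {}" using i0 by auto
    have oth: "card (R i) + M \<le> 2*t+2" if "i \<in> I - {i0}" for i
      using D1[OF i0(1) _ _ ne, of i] that M_def by auto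
    have Mle: "M \<le> 2*t+2"
    proof (cases "i0 = 1")
      case True
      then show ?thesis using oth[of 2] n6 by (auto simp: I_def)
    next
      case False
      then show ?thesis using oth[of 1] n6 by (auto simp: I_def)
    qed
    have split: "(\<Sum>i\<in>I. card (R i)) = M + (\<Sum>i\<in>I-{i0}. card (R i))"
      using i0 by (simp add: M_def I_def sum.remove)
    have cI: "card (I - {i0}) = n - 1" using i0 cardI by (simp add: I_def)
    show ?thesis
    proof (cases "M \<ge> t+3")
      case True
      have "(\<Sum>i\<in>I-{i0}. card (R i)) \<le> (n-1) * (2*t+2-M)"
        using sum_bounded_above[of "I-{i0}" "\<lambda>i. card (R i)" "2*t+2-M"] oth cI by fastforce
      then have A0: "int (\<Sum>i\<in>I-{i0}. card (R i)) \<le> int ((n-1) * (2*t+2-M))"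
        by (rule of_nat_le_iff[THEN iffD2])
      have "int ((n-1) * (2*t+2-M)) = (int n - 1) * (2*int t+2-int M)"
        using Mle n6 by (simp add: of_nat_diff)
      with A0 have A: "int (\<Sum>i\<in>I-{i0}. card (R i)) \<le> (int n - 1) * (2*int t+2-int M)" by linarith
      define u where "u = int M - int t - 3"
      have u0: "u \<ge> 0" using True u_def by simp
      have "(int n - 1) * (2*int t+2-int M) = (int n - 1)*(int t - 1) - (int n - 1) * u"
        by (simp add: u_def algebra_simps)
      moreover have "(int n - 1) * u \<ge> u" using u0 n6 by (simp add: mult_right_mono[of 1 "int n - 1" u, simplified])
      ultimately have "int M + int (\<Sum>i\<in>I-{i0}. card (R i)) \<le> int M + (int n - 1)*(int t - 1) - u"
        using A by linarith
      also have "\<dots> = int n * int t - int n + 4" by (simp add: u_def algebra_simps)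
      finally have "int (\<Sum>i\<in>I. card (R i)) \<le> int (n*t)" using split n6 by simp
      then have "(\<Sum>i\<in>I. card (R i)) \<le> n*t" by (rule of_nat_le_iff[THEN iffD1])
      then show ?thesis using I_def by simp
    next
      case False
      then have M2: "M = t+2" using i0 M_def by simp
      show ?thesis
      proof (cases "q \<ge> 2")
        case True
        have "(\<Sum>i\<in>I-{i0}. card (R i)) \<le> (n-1) * t"
          using sum_bounded_above[of "I-{i0}" "\<lambda>i. card (R i)" t] oth cI M2 by fastforce
        then have "(\<Sum>i\<in>I. card (R i)) \<le> t + 2 + (n-1)*t" using split M2 by simp
        also have "\<dots> = n*t + 2" using n6 by (cases n) (auto simp: algebra_simps)
        finally show ?thesis using True I_def q_def by simp
      next
        case False
        then have "\<not> 2*(t+1) \<le> n" unfolding q_def by (simp add: less_eq_div_iff_mult_less_eq)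
        then have small: "n < 2*t+2" by simp
        have oth2: "card (R i) \<le> t - 1" if "i \<in> I - {i0}" for i
        proof (rule ccontr)
          assume "\<not> card (R i) \<le> t - 1"
          then have ci: "card (R i) = t" using oth[OF that] M2 t1 by simp
          have "R i \<inter> R i0 \<noteq> {}"
          proof
            assume dj: "R i \<inter> R i0 = {}"
            have "R i \<union> R i0 \<subseteq> {1..n}" using Rsub that i0 I_def by auto
            then have "card (R i \<union> R i0) \<le> n" using card_mono[of "{1..n}"] by fastforce
            moreover have "card (R i \<union> R i0) = card (R i) + card (R i0)"
              using dj finR that i0 by (simp add: card_Un_disjoint)
            ultimately show False using ci M2 M_def small by simp
          qed
          then have "card (R i) + card (R i0) \<le> 2*t+1" using D2[of i i0] that i0 by auto
          then show False using ci M2 M_def by simp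
        qed
        have "(\<Sum>i\<in>I-{i0}. card (R i)) \<le> (n-1) * (t-1)"
          using sum_bounded_above[of "I-{i0}" "\<lambda>i. card (R i)" "t-1"] oth2 cI by fastforce
        then have B0: "int (\<Sum>i\<in>I-{i0}. card (R i)) \<le> int ((n-1) * (t-1))"
          by (rule of_nat_le_iff[THEN iffD2])
        have "int ((n-1) * (t-1)) = (int n - 1) * (int t - 1)"
          using t1 n6 by (simp add: of_nat_diff)
        with B0 have B: "int (\<Sum>i\<in>I-{i0}. card (R i)) \<le> (int n - 1) * (int t - 1)" by linarith
        have "int (\<Sum>i\<in>I. card (R i)) \<le> int t + 2 + (int n - 1) * (int t - 1)"
          using split M2 B by simp
        also have "\<dots> = int n * int t - int n + 3" by (simp add: algebra_simps)
        finally have "int (\<Sum>i\<in>I. card (R i)) \<le> int (n*t)" using n6 by simp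
        then have "(\<Sum>i\<in>I. card (R i)) \<le> n*t" by (rule of_nat_le_iff[THEN iffD1])
        then show ?thesis using I_def by simp
      qed
    qed
  qed
qed



lemma row_slice:
  assumes S: "S \<subseteq> KK_V n"
  shows "S \<inter> {z. fst z = i} = Pair i ` {j\<in>{1..n}. (i,j) \<in> S}"
  using S by (auto simp: KK_V_def)

lemma card_by_rows:
  assumes S: "S \<subseteq> KK_V n"
  shows "card S = (\<Sum>i\<in>{1..n}. rowc S i)"
proof -
  have fin: "finite S" using S finite_KK finite_subset by blast
  have "S = (\<Union>i\<in>{1..n}. S \<inter> {z. fst z = i})" using S by (auto simp: KK_V_def)
  then have "card S = card (\<Union>i\<in>{1..n}. S \<inter> {z. fst z = i})" by simp
  also have "\<dots> = (\<Sum>i\<in>{1..n}. card (S \<inter> {z. fst z = i}))"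
    by (rule card_UN_disjoint) (use fin in auto)
  finally show ?thesis by (simp add: rowc_def)
qed

lemma lower:
  fixes n t :: nat
  assumes n6: "n \<ge> 6" and t1: "1 \<le> t" and tn: "t + 3 \<le> n"
    and W: "weak_k_resolving (KK_V n) KK_adj (2*n - 2*t - 1) S"
  shows "n*n \<le> card S + (n*t + n div (t+1))"
proof -
  have S: "S \<subseteq> KK_V n" using W by (simp add: weak_k_resolving_def)
  have n3: "n \<ge> 3" using n6 by simp
  define R where "R i = {j\<in>{1..n}. (i,j) \<notin> S}" for i
  have Rsub: "R i \<subseteq> {1..n}" for i by (auto simp: R_def)
  have rc: "rowc S i + card (R i) = n" for i
  proof -
    have "rowc S i = card (Pair i ` {j\<in>{1..n}. (i,j) \<in> S})" by (simp add: rowc_def row_slice[OF S])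
    also have "\<dots> = card {j\<in>{1..n}. (i,j) \<in> S}" by (simp add: card_image inj_on_def)
    finally have "rowc S i = card {j\<in>{1..n}. (i,j) \<in> S}" .
    moreover have "card {j\<in>{1..n}. (i,j) \<in> S} + card (R i) = card {1..n}"
    proof -
      have "card {1..n} = card ({j\<in>{1..n}. (i,j) \<in> S} \<union> R i)"
        by (rule arg_cong[where f=card]) (auto simp: R_def)
      also have "\<dots> = card {j\<in>{1..n}. (i,j) \<in> S} + card (R i)"
        by (rule card_Un_disjoint) (auto simp: R_def)
      finally show ?thesis by simp
    qed
    ultimately show ?thesis by simp
  qed
  have C: "card (R i) + card (R i') + of_bool (j \<in> R i) + of_bool (j \<in> R i') \<le> 2*t+3"
    if h: "i \<in> {1..n}" "i' \<in> {1..n}" "i \<noteq> i'" "j \<in> {1..n}" for i i' j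
  proof -
    have xV: "(i,j) \<in> KK_V n" "(i',j) \<in> KK_V n" using h by (auto simp: KK_V_def)
    have "DeltaS (KK_V n) KK_adj S (i,j) (i',j) \<ge> 2*n - 2*t - 1"
      using W xV h by (auto simp: weak_k_resolving_def)
    then have "int (DeltaS (KK_V n) KK_adj S (i,j) (i',j)) \<ge> 2*int n - 2*int t - 1"
      using tn by linarith
    moreover have "int (DeltaS (KK_V n) KK_adj S (i,j) (i',j)) =
        of_bool ((i,j) \<in> S) + of_bool ((i',j) \<in> S) + int (rowc S i) + int (rowc S i')"
      by (rule DeltaS_col[OF n3 S xV refl refl h(3)])
    moreover have "of_bool ((i,j) \<in> S) = (1::int) - of_bool (j \<in> R i)"
      "of_bool ((i',j) \<in> S) = (1::int) - of_bool (j \<in> R i')"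
      using h by (auto simp: R_def)
    moreover have "int (rowc S i) = int n - int (card (R i))" "int (rowc S i') = int n - int (card (R i'))"
      using rc[of i] rc[of i'] by linarith+
    ultimately have "int (card (R i)) + int (card (R i')) + of_bool (j \<in> R i) + of_bool (j \<in> R i') \<le> 2*int t+3"
      by linarith
    then show ?thesis by (simp add: of_bool_def split: if_splits)
  qed
  have sumR: "(\<Sum>i\<in>{1..n}. card (R i)) \<le> n*t + n div (t+1)"
    by (rule comb[OF n6 t1 tn]) (use Rsub C in auto)
  have "card S + (\<Sum>i\<in>{1..n}. card (R i)) = (\<Sum>i\<in>{1..n}. rowc S i + card (R i))"
    by (simp add: card_by_rows[OF S] sum.distrib)
  also have "\<dots> = n*n" by (simp add: rc)
  finally show ?thesis using sumR by linarith
qed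



lemma band_row_card:
  fixes n t i :: nat
  assumes "1 \<le> i" "i \<le> n" "t \<le> n"
  shows "card {j\<in>{1..n}. (i \<le> j \<and> j < i + t) \<or> j + n < i + t} = t"
proof -
  have e: "{j\<in>{1..n}. (i \<le> j \<and> j < i + t) \<or> j + n < i + t} = {i..<min (n+1) (i+t)} \<union> {1..<i+t-n}"
    using assms by auto
  have d: "{i..<min (n+1) (i+t)} \<inter> {1..<i+t-n} = {}" using assms by auto
  have "card ({i..<min (n+1) (i+t)} \<union> {1..<i+t-n}) = card {i..<min (n+1) (i+t)} + card {1..<i+t-n}"
    by (rule card_Un_disjoint) (use d in auto)
  also have "\<dots> = t" using assms by auto
  finally show ?thesis using e by simp
qed

lemma band_col_card:
  fixes n t j :: nat
  assumes "1 \<le> j" "j \<le> n" "t \<le> n"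
  shows "card {i\<in>{1..n}. (i \<le> j \<and> j < i + t) \<or> j + n < i + t} = t"
proof -
  have e: "{i\<in>{1..n}. (i \<le> j \<and> j < i + t) \<or> j + n < i + t} = {max 1 (j+1-t)..j} \<union> {j+n+1-t..n}"
    using assms by auto
  have d: "{max 1 (j+1-t)..j} \<inter> {j+n+1-t..n} = {}" using assms by auto
  have "card ({max 1 (j+1-t)..j} \<union> {j+n+1-t..n}) = card {max 1 (j+1-t)..j} + card {j+n+1-t..n}"
    by (rule card_Un_disjoint) (use d in auto)
  also have "\<dots> = t" using assms by auto
  finally show ?thesis using e by simp
qed



definition inA :: "nat \<Rightarrow> nat \<Rightarrow> nat \<Rightarrow> bool" where
  "inA n t i \<longleftrightarrow> (\<exists>k < n div (t+1). i = k*(t+1)+1)"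
definition inB :: "nat \<Rightarrow> nat \<Rightarrow> nat \<Rightarrow> bool" where
  "inB n t j \<longleftrightarrow> (\<exists>k < n div (t+1). j = k*(t+1)+t+1)"
definition inT :: "nat \<Rightarrow> nat \<Rightarrow> nat \<Rightarrow> nat \<Rightarrow> bool" where
  "inT n t i j \<longleftrightarrow> (i \<le> j \<and> j < i + t) \<or> j + n < i + t \<or>
     (\<exists>k < n div (t+1). i = k*(t+1)+1 \<and> j = k*(t+1)+t+1)"
definition S0 :: "nat \<Rightarrow> nat \<Rightarrow> (nat \<times> nat) set" where
  "S0 n t = {p \<in> KK_V n. \<not> inT n t (fst p) (snd p)}"

lemma blk_le:
  fixes n t k :: nat
  assumes "k < n div (t+1)"
  shows "k*(t+1)+t+1 \<le> n"
proof -
  have "Suc k \<le> n div (t+1)" using assms by simp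
  then have "Suc k * (t+1) \<le> n div (t+1) * (t+1)" by (rule mult_le_mono1)
  also have "\<dots> \<le> n" by (rule div_times_less_eq_dividend)
  finally show ?thesis by simp
qed

lemma blk_inj:
  fixes t k l :: nat
  shows "k*(t+1)+1 = l*(t+1)+1 \<longleftrightarrow> k = l"
proof -
  have "k*(t+1)+1 = l*(t+1)+1 \<longleftrightarrow> k*(t+1) = l*(t+1)" by linarith
  also have "\<dots> \<longleftrightarrow> k = l" by (rule mult_cancel2[THEN trans]) simp
  finally show ?thesis .
qed

lemma blk_sep:
  fixes t k l :: nat
  assumes "k < l"
  shows "k*(t+1)+t+1 < l*(t+1)+1"
proof -
  have "Suc k * (t+1) \<le> l * (t+1)" using assms by (intro mult_le_mono1) simp
  then show ?thesis by simp
qed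

lemma S0_sub: "S0 n t \<subseteq> KK_V n" by (auto simp: S0_def)

lemma rowT_set:
  assumes "1 \<le> i" "i \<le> n"
  shows "{j\<in>{1..n}. inT n t i j} =
     {j\<in>{1..n}. (i \<le> j \<and> j < i + t) \<or> j + n < i + t} \<union> (if inA n t i then {i+t} else {})"
proof -
  have "(\<exists>k < n div (t+1). i = k*(t+1)+1 \<and> j = k*(t+1)+t+1) \<longleftrightarrow> inA n t i \<and> j = i + t" for j
    by (auto simp: inA_def)
  moreover have "inA n t i \<Longrightarrow> i + t \<le> n"
  proof -
    assume "inA n t i"
    then obtain k where k: "k < n div (t+1)" "i = k*(t+1)+1" by (auto simp: inA_def)
    from blk_le[OF k(1)] k(2) show ?thesis by simp
  qed
  ultimately show ?thesis using assms by (auto simp: inT_def)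
qed

lemma colT_set:
  assumes "1 \<le> j" "j \<le> n"
  shows "{i\<in>{1..n}. inT n t i j} =
     {i\<in>{1..n}. (i \<le> j \<and> j < i + t) \<or> j + n < i + t} \<union> (if inB n t j then {j-t} else {})"
proof -
  have "(\<exists>k < n div (t+1). i = k*(t+1)+1 \<and> j = k*(t+1)+t+1) \<longleftrightarrow> inB n t j \<and> i = j - t" for i
    by (auto simp: inB_def)
  moreover have "inB n t j \<Longrightarrow> 1 \<le> j - t \<and> j - t \<le> n"
  proof -
    assume "inB n t j"
    then obtain k where k: "k < n div (t+1)" "j = k*(t+1)+t+1" by (auto simp: inB_def)
    from blk_le[OF k(1)] k(2) show ?thesis by simp
  qed
  ultimately show ?thesis using assms by (auto simp: inT_def)
qed

lemma rowT_card:
  assumes "1 \<le> i" "i \<le> n" "t \<le> n"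
  shows "card {j\<in>{1..n}. inT n t i j} = t + of_bool (inA n t i)"
proof -
  have fin: "finite {j\<in>{1..n}. (i \<le> j \<and> j < i + t) \<or> j + n < i + t}" by simp
  show ?thesis
  proof (cases "inA n t i")
    case True
    have "i + t \<notin> {j\<in>{1..n}. (i \<le> j \<and> j < i + t) \<or> j + n < i + t}" by auto
    then show ?thesis using True rowT_set[OF assms(1,2), of t] band_row_card[OF assms] fin by simp
  next
    case False
    then show ?thesis using rowT_set[OF assms(1,2), of t] band_row_card[OF assms] by simp
  qed
qed

lemma colT_card:
  assumes "1 \<le> j" "j \<le> n" "t \<le> n" "1 \<le> t"
  shows "card {i\<in>{1..n}. inT n t i j} = t + of_bool (inB n t j)"
proof -
  have fin: "finite {i\<in>{1..n}. (i \<le> j \<and> j < i + t) \<or> j + n < i + t}" by simp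
  show ?thesis
  proof (cases "inB n t j")
    case True
    then have "j \<ge> t + 1" by (auto simp: inB_def)
    then have "j - t \<notin> {i\<in>{1..n}. (i \<le> j \<and> j < i + t) \<or> j + n < i + t}" by auto
    then show ?thesis using True colT_set[OF assms(1,2), of t] band_col_card[OF assms(1-3)] fin by simp
  next
    case False
    then show ?thesis using colT_set[OF assms(1,2), of t] band_col_card[OF assms(1-3)] by simp
  qed
qed

lemma rowc_S0:
  assumes "1 \<le> i" "i \<le> n" "t \<le> n"
  shows "int (rowc (S0 n t) i) = int n - int t - of_bool (inA n t i)"
proof -
  have "rowc (S0 n t) i = card (Pair i ` {j\<in>{1..n}. (i,j) \<in> S0 n t})"
    by (simp add: rowc_def row_slice[OF S0_sub])
  also have "\<dots> = card {j\<in>{1..n}. (i,j) \<in> S0 n t}" by (simp add: card_image inj_on_def)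
  also have "{j\<in>{1..n}. (i,j) \<in> S0 n t} = {1..n} - {j\<in>{1..n}. inT n t i j}"
    using assms by (auto simp: S0_def KK_V_def)
  also have "card \<dots> = n - card {j\<in>{1..n}. inT n t i j}" by (subst card_Diff_subset) auto
  finally have "rowc (S0 n t) i = n - (t + of_bool (inA n t i))" using rowT_card[OF assms] by simp
  moreover have "t + of_bool (inA n t i) \<le> n"
    using rowT_card[OF assms] card_mono[of "{1..n}" "{j\<in>{1..n}. inT n t i j}"] by fastforce
  ultimately show ?thesis by (simp add: of_nat_diff)
qed

lemma col_slice:
  assumes S: "S \<subseteq> KK_V n"
  shows "S \<inter> {z. snd z = j} = (\<lambda>i. (i,j)) ` {i\<in>{1..n}. (i,j) \<in> S}"
  using S by (auto simp: KK_V_def)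

lemma colc_S0:
  assumes "1 \<le> j" "j \<le> n" "t \<le> n" "1 \<le> t"
  shows "int (colc (S0 n t) j) = int n - int t - of_bool (inB n t j)"
proof -
  have "colc (S0 n t) j = card ((\<lambda>i. (i,j)) ` {i\<in>{1..n}. (i,j) \<in> S0 n t})"
    by (simp add: colc_def col_slice[OF S0_sub])
  also have "\<dots> = card {i\<in>{1..n}. (i,j) \<in> S0 n t}" by (simp add: card_image inj_on_def)
  also have "{i\<in>{1..n}. (i,j) \<in> S0 n t} = {1..n} - {i\<in>{1..n}. inT n t i j}"
    using assms by (auto simp: S0_def KK_V_def)
  also have "card \<dots> = n - card {i\<in>{1..n}. inT n t i j}" by (subst card_Diff_subset) auto
  finally have "colc (S0 n t) j = n - (t + of_bool (inB n t j))" using colT_card[OF assms] by simp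
  moreover have "t + of_bool (inB n t j) \<le> n"
    using colT_card[OF assms] card_mono[of "{1..n}" "{i\<in>{1..n}. inT n t i j}"] by fastforce
  ultimately show ?thesis by (simp add: of_nat_diff)
qed



lemma ex_blk_eq:
  fixes t k :: nat
  assumes "k < q"
  shows "(\<exists>l<q. k*(t+1)+1 = l*(t+1)+1 \<and> j = l*(t+1)+t+1) \<longleftrightarrow> j = k*(t+1)+t+1"
proof
  assume "\<exists>l<q. k*(t+1)+1 = l*(t+1)+1 \<and> j = l*(t+1)+t+1"
  then obtain l where "k*(t+1)+1 = l*(t+1)+1" "j = l*(t+1)+t+1" by blast
  then show "j = k*(t+1)+t+1" using blk_inj[of k t l] by simp
next
  assume "j = k*(t+1)+t+1"
  then show "\<exists>l<q. k*(t+1)+1 = l*(t+1)+1 \<and> j = l*(t+1)+t+1" using assms by blast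
qed

lemma rowA:
  assumes k: "k < n div (t+1)" and j: "1 \<le> j" "j \<le> n"
  shows "inT n t (k*(t+1)+1) j \<longleftrightarrow> k*(t+1)+1 \<le> j \<and> j \<le> k*(t+1)+1+t"
proof -
  have le: "k*(t+1)+t+1 \<le> n" by (rule blk_le[OF k])
  have "inT n t (k*(t+1)+1) j \<longleftrightarrow> (k*(t+1)+1 \<le> j \<and> j < k*(t+1)+1 + t) \<or> j + n < k*(t+1)+1 + t
      \<or> j = k*(t+1)+t+1"
    unfolding inT_def using ex_blk_eq[OF k, of t j] by simp
  then show ?thesis using le by auto
qed

lemma ex_blk_eq2:
  fixes t k :: nat
  assumes "k < q"
  shows "(\<exists>l<q. i = l*(t+1)+1 \<and> k*(t+1)+t+1 = l*(t+1)+t+1) \<longleftrightarrow> i = k*(t+1)+1"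
proof -
  have eq: "k*(t+1)+t+1 = l*(t+1)+t+1 \<longleftrightarrow> k = l" for l
    using blk_inj[of k t l] by linarith
  show ?thesis
  proof
    assume "\<exists>l<q. i = l*(t+1)+1 \<and> k*(t+1)+t+1 = l*(t+1)+t+1"
    then obtain l where "i = l*(t+1)+1" "k*(t+1)+t+1 = l*(t+1)+t+1" by blast
    then show "i = k*(t+1)+1" using eq[of l] by simp
  next
    assume "i = k*(t+1)+1"
    then show "\<exists>l<q. i = l*(t+1)+1 \<and> k*(t+1)+t+1 = l*(t+1)+t+1" using assms by blast
  qed
qed

lemma colB:
  assumes k: "k < n div (t+1)" and i: "1 \<le> i" "i \<le> n"
  shows "inT n t i (k*(t+1)+t+1) \<longleftrightarrow> k*(t+1)+1 \<le> i \<and> i \<le> k*(t+1)+1+t"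
proof -
  have le: "k*(t+1)+t+1 \<le> n" by (rule blk_le[OF k])
  have "inT n t i (k*(t+1)+t+1) \<longleftrightarrow> (i \<le> k*(t+1)+t+1 \<and> k*(t+1)+t+1 < i + t)
      \<or> k*(t+1)+t+1 + n < i + t \<or> i = k*(t+1)+1"
    unfolding inT_def using ex_blk_eq2[OF k, of i t] by simp
  then show ?thesis using le i by auto
qed

lemma blk_disj:
  fixes t k l x :: nat
  assumes "k \<noteq> l"
  shows "\<not> ((k*(t+1)+1 \<le> x \<and> x \<le> k*(t+1)+1+t) \<and> (l*(t+1)+1 \<le> x \<and> x \<le> l*(t+1)+1+t))"
proof (cases "k < l")
  case True
  then show ?thesis using blk_sep[OF True, of t] by linarith
next
  case False
  then have "l < k" using assms by simp
  then show ?thesis using blk_sep[of l k t] by linarith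
qed

lemma h3:
  assumes "inA n t i" "inA n t i'" "i \<noteq> i'" "1 \<le> j" "j \<le> n"
  shows "\<not> (inT n t i j \<and> inT n t i' j)"
proof -
  obtain k where k: "k < n div (t+1)" "i = k*(t+1)+1" using assms by (auto simp: inA_def)
  obtain l where l: "l < n div (t+1)" "i' = l*(t+1)+1" using assms by (auto simp: inA_def)
  have "k \<noteq> l" using k l assms by auto
  then show ?thesis using rowA[OF k(1) assms(4,5)] rowA[OF l(1) assms(4,5)] blk_disj[of k l t j] k l by auto
qed

lemma h4:
  assumes "inB n t j" "inB n t j'" "j \<noteq> j'" "1 \<le> i" "i \<le> n"
  shows "\<not> (inT n t i j \<and> inT n t i j')"
proof -
  obtain k where k: "k < n div (t+1)" "j = k*(t+1)+t+1" using assms by (auto simp: inB_def)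
  obtain l where l: "l < n div (t+1)" "j' = l*(t+1)+t+1" using assms by (auto simp: inB_def)
  have "k \<noteq> l" using k l assms by auto
  then show ?thesis using colB[OF k(1) assms(4,5)] colB[OF l(1) assms(4,5)] blk_disj[of k l t i] k l by auto
qed

lemma corner_T:
  assumes "k < n div (t+1)"
  shows "inT n t (k*(t+1)+1) (k*(t+1)+t+1)"
  using assms by (auto simp: inT_def)

lemma card_S0:
  assumes n6: "n \<ge> 6" and t1: "1 \<le> t" and tn: "t + 3 \<le> n"
  shows "card (S0 n t) = n^2 - t*n - n div (t+1)"
proof -
  define q where "q = n div (t+1)"
  have Aset: "{1..n} \<inter> {i. inA n t i} = (\<lambda>k. k*(t+1)+1) ` {..<q}"
  proof
    show "{1..n} \<inter> {i. inA n t i} \<subseteq> (\<lambda>k. k*(t+1)+1) ` {..<q}"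
      by (auto simp: inA_def q_def)
    show "(\<lambda>k. k*(t+1)+1) ` {..<q} \<subseteq> {1..n} \<inter> {i. inA n t i}"
    proof
      fix x assume "x \<in> (\<lambda>k. k*(t+1)+1) ` {..<q}"
      then obtain k where k: "k < q" "x = k*(t+1)+1" by auto
      have "k*(t+1)+t+1 \<le> n" using blk_le k q_def by simp
      then show "x \<in> {1..n} \<inter> {i. inA n t i}" using k by (auto simp: inA_def q_def)
    qed
  qed
  have cA: "card ({1..n} \<inter> {i. inA n t i}) = q"
  proof -
    have "inj_on (\<lambda>k. k*(t+1)+1) {..<q}"
      by (rule inj_onI) (use blk_inj[of _ t] in blast)
    then show ?thesis unfolding Aset by (simp add: card_image)
  qed
  have "int (card (S0 n t)) = (\<Sum>i\<in>{1..n}. int (rowc (S0 n t) i))"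
    by (simp add: card_by_rows[OF S0_sub])
  also have "\<dots> = (\<Sum>i\<in>{1..n}. int n - int t - of_bool (inA n t i))"
    by (rule sum.cong) (use rowc_S0 tn in auto)
  also have "\<dots> = (\<Sum>i\<in>{1..n}. int n - int t) - (\<Sum>i\<in>{1..n}. of_bool (inA n t i))"
    by (simp add: sum_subtractf)
  also have "\<dots> = int n * (int n - int t) - int q"
  proof -
    have "(\<Sum>i\<in>{1..n}. (of_bool (inA n t i)::int)) = int q" using cA by simp
    moreover have "(\<Sum>i\<in>{1..n}. int n - int t) = int n * (int n - int t)" by simp
    ultimately show ?thesis by simp
  qed
  finally have e: "int (card (S0 n t)) = int n * (int n - int t) - int q" .
  have "q * (t+1) \<le> n" unfolding q_def by (rule div_times_less_eq_dividend)
  moreover have "q \<le> q * (t+1)" by simp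
  ultimately have "q \<le> n" by linarith
  have "n^2 - t*n - q = n * (n - t) - q" by (simp add: power2_eq_square diff_mult_distrib2 mult.commute)
  moreover have "int (n * (n - t) - q) = int n * (int n - int t) - int q"
  proof -
    have "n * 1 \<le> n * (n - t)" using tn by (intro mult_le_mono2) simp
    then have "q \<le> n * (n - t)" using \<open>q \<le> n\<close> by linarith
    then show ?thesis using tn by (simp add: of_nat_diff)
  qed
  ultimately show ?thesis using e q_def by simp
qed



lemma S0_mem: "1 \<le> a \<Longrightarrow> a \<le> n \<Longrightarrow> 1 \<le> b \<Longrightarrow> b \<le> n \<Longrightarrow> (a,b) \<in> S0 n t \<longleftrightarrow> \<not> inT n t a b"
  by (auto simp: S0_def KK_V_def)

lemma arith3:
  assumes "\<not>(ai \<and> ai')" "\<not>(bj \<and> bj')" "ai \<and> bj \<longrightarrow> \<not> sx" "ai \<and> bj' \<longrightarrow> \<not> sa"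
    "ai' \<and> bj \<longrightarrow> \<not> sb" "ai' \<and> bj' \<longrightarrow> \<not> sy"
  shows "of_bool ai + of_bool ai' + of_bool bj + of_bool bj' + of_bool sx + of_bool sy
     + 2 * of_bool sa + 2 * of_bool sb \<le> (7::int)"
  using assms by (cases ai; cases ai'; cases bj; cases bj'; cases sx; cases sy; cases sa; cases sb) simp_all

lemma arith4:
  assumes "ai \<and> ai' \<and> bj \<and> bj' \<longrightarrow> \<not> sx \<or> \<not> sa"
  shows "of_bool ai + of_bool ai' + of_bool bj + of_bool bj' + of_bool sx + of_bool sy
     + 2 * of_bool sa + 2 * of_bool sb \<le> (9::int)"
  using assms by (cases ai; cases ai'; cases bj; cases bj'; cases sx; cases sy; cases sa; cases sb) simp_all

lemma arith5:
  shows "of_bool ai + of_bool ai' + of_bool bj + of_bool bj' + of_bool sx + of_bool sy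
     + 2 * of_bool sa + 2 * of_bool sb \<le> (10::int)"
  by (cases ai; cases ai'; cases bj; cases bj'; cases sx; cases sy; cases sa; cases sb) simp_all

lemma pair2:
  assumes "\<not>(a \<and> b \<and> \<not> (sx \<or> sy))"
  shows "of_bool sx + of_bool sy \<ge> of_bool a + of_bool b - (1::int)"
  using assms by (cases a; cases b; cases sx; cases sy) simp_all

lemma q_le1:
  fixes n t :: nat
  assumes "n \<ge> 6" "t + 3 = n"
  shows "n div (t+1) \<le> 1"
proof (rule ccontr)
  assume "\<not> ?thesis"
  then have "1 < n div (t+1)" by linarith
  from blk_le[OF this] assms show False by simp
qed

lemma q_le2:
  fixes n t :: nat
  assumes "n \<ge> 6" "t + 4 = n"
  shows "n div (t+1) \<le> 2"
proof (rule ccontr)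
  assume "\<not> ?thesis"
  then have "2 < n div (t+1)" by linarith
  from blk_le[OF this] assms show False by simp
qed

lemma S0_resolving:
  fixes n t :: nat
  assumes n6: "n \<ge> 6" and t1: "1 \<le> t" and tn: "t + 3 \<le> n"
  shows "weak_k_resolving (KK_V n) KK_adj (2*n - 2*t - 1) (S0 n t)"
  unfolding weak_k_resolving_def
proof (intro conjI ballI impI)
  show "S0 n t \<subseteq> KK_V n" by (rule S0_sub)
  fix x y assume xV: "x \<in> KK_V n" and yV: "y \<in> KK_V n" and xy: "x \<noteq> y"
  have n3: "n \<ge> 3" using n6 by simp
  have tle: "t \<le> n" using tn by simp
  obtain i j where x: "x = (i,j)" by (cases x)
  obtain i' j' where y: "y = (i',j')" by (cases y)
  have b: "1 \<le> i" "i \<le> n" "1 \<le> j" "j \<le> n" "1 \<le> i'" "i' \<le> n" "1 \<le> j'" "j' \<le> n"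
    using xV yV x y by (auto simp: KK_V_def)
  have ob: "\<And>P. of_bool P \<le> (1::int)" "\<And>P. 0 \<le> (of_bool P :: int)" by simp_all
  have goal: "int (DeltaS (KK_V n) KK_adj (S0 n t) x y) \<ge> 2*int n - 2*int t - 1"
  proof (cases "i = i'")
    case True
    then have jj: "j \<noteq> j'" using xy x y by simp
    have D: "int (DeltaS (KK_V n) KK_adj (S0 n t) x y) =
      of_bool (x \<in> S0 n t) + of_bool (y \<in> S0 n t) + int (colc (S0 n t) j) + int (colc (S0 n t) j')"
      by (rule DeltaS_row[OF n3 S0_sub xV yV x]) (use y True jj in simp_all)
    have "\<not> (inB n t j \<and> inB n t j' \<and> \<not> (x \<in> S0 n t \<or> y \<in> S0 n t))"
      using h4[OF _ _ jj b(1,2), of t] S0_mem b x y True by auto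
    from pair2[OF this] D colc_S0[OF b(3,4) tle t1] colc_S0[OF b(7,8) tle t1]
    show ?thesis by linarith
  next
    case ii: False
    show ?thesis
    proof (cases "j = j'")
      case True
      have D: "int (DeltaS (KK_V n) KK_adj (S0 n t) x y) =
        of_bool (x \<in> S0 n t) + of_bool (y \<in> S0 n t) + int (rowc (S0 n t) i) + int (rowc (S0 n t) i')"
        by (rule DeltaS_col[OF n3 S0_sub xV yV x]) (use y True ii in simp_all)
      have "\<not> (inA n t i \<and> inA n t i' \<and> \<not> (x \<in> S0 n t \<or> y \<in> S0 n t))"
        using h3[OF _ _ ii b(3,4), of t] S0_mem b x y True by auto
      from pair2[OF this] D rowc_S0[OF b(1,2) tle] rowc_S0[OF b(5,6) tle]
      show ?thesis by linarith
    next
      case jj: False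
      have D: "int (DeltaS (KK_V n) KK_adj (S0 n t) x y) =
         int (rowc (S0 n t) i) + int (rowc (S0 n t) i') + int (colc (S0 n t) j) + int (colc (S0 n t) j')
         - of_bool (x \<in> S0 n t) - of_bool (y \<in> S0 n t) - 2 * of_bool ((i,j') \<in> S0 n t) - 2 * of_bool ((i',j) \<in> S0 n t)"
        by (rule DeltaS_gen[OF n3 S0_sub xV yV x y ii jj])
      note R = rowc_S0[OF b(1,2) tle] rowc_S0[OF b(5,6) tle] colc_S0[OF b(3,4) tle t1] colc_S0[OF b(7,8) tle t1]
      let ?E = "(of_bool (inA n t i) :: int) + of_bool (inA n t i') + of_bool (inB n t j) + of_bool (inB n t j')
         + of_bool (x \<in> S0 n t) + of_bool (y \<in> S0 n t) + 2 * of_bool ((i,j') \<in> S0 n t) + 2 * of_bool ((i',j) \<in> S0 n t)"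
      have "?E \<le> 2 * int n - 2 * int t + 1"
      proof (cases "t + 5 \<le> n")
        case True
        then have i5: "int t + 5 \<le> int n" by simp
        have e10: "?E \<le> 10" by (rule arith5)
        show ?thesis using e10 i5 by linarith
      next
        case False
        then consider "t + 3 = n" | "t + 4 = n" using tn by linarith
        then show ?thesis
        proof cases
          case 1
          have q1: "n div (t+1) \<le> 1" by (rule q_le1[OF n6 1])
          have Ai: "\<And>a. inA n t a \<Longrightarrow> a = 1 \<and> 0 < n div (t+1)"
            using q1 by (auto simp: inA_def)
          have Bj: "\<And>a. inB n t a \<Longrightarrow> a = t + 1 \<and> 0 < n div (t+1)"
            using q1 by (auto simp: inB_def)
          have cor: "\<And>a c. inA n t a \<Longrightarrow> inB n t c \<Longrightarrow> (a, c) \<notin> S0 n t"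
          proof -
            fix a c assume "inA n t a" "inB n t c"
            then have "a = 1" "c = t+1" "0 < n div (t+1)" using Ai Bj by auto
            then show "(a, c) \<notin> S0 n t" using corner_T[of 0 n t] by (auto simp: S0_def)
          qed
          have "\<not>(inA n t i \<and> inA n t i')" using Ai ii by blast
          moreover have "\<not>(inB n t j \<and> inB n t j')" using Bj jj by blast
          ultimately have "?E \<le> 7"
            by (intro arith3) (use cor x y in auto)
          moreover have "int t + 3 = int n" using 1 by simp
          ultimately show ?thesis by linarith
        next
          case 2
          have q2: "n div (t+1) \<le> 2" by (rule q_le2[OF n6 2])
          have "inA n t i \<and> inA n t i' \<and> inB n t j \<and> inB n t j' \<longrightarrow> x \<notin> S0 n t \<or> (i,j') \<notin> S0 n t"
          proof
            assume h: "inA n t i \<and> inA n t i' \<and> inB n t j \<and> inB n t j'"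
            obtain k where k: "k < n div (t+1)" "i = k*(t+1)+1" using h by (auto simp: inA_def)
            obtain l where l: "l < n div (t+1)" "i' = l*(t+1)+1" using h by (auto simp: inA_def)
            obtain m where m: "m < n div (t+1)" "j = m*(t+1)+t+1" using h by (auto simp: inB_def)
            obtain p where p: "p < n div (t+1)" "j' = p*(t+1)+t+1" using h by (auto simp: inB_def)
            have "k \<noteq> l" using k l ii by auto
            moreover have "m \<noteq> p" using m p jj by auto
            ultimately have "k = m \<or> k = p" using k l m p q2 by linarith
            then show "x \<notin> S0 n t \<or> (i,j') \<notin> S0 n t"
              using corner_T[OF k(1)] k m p x by (auto simp: S0_def)
          qed
          then have "?E \<le> 9" using x by (intro arith4) auto
          moreover have "int t + 4 = int n" using 2 by simp
          ultimately show ?thesis by linarith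
        qed
      qed
      then show ?thesis using D R by linarith
    qed
  qed
  have "int (2*n - 2*t - 1) = 2*int n - 2*int t - 1" using tn by simp
  then show "2*n - 2*t - 1 \<le> DeltaS (KK_V n) KK_adj (S0 n t) x y" using goal by linarith
qed


theorem mainTheorem11:
  fixes n t :: nat
  assumes "n \<ge> 6" and "1 \<le> t" and "t \<le> n - 3"
  shows "wdim (KK_V n) KK_adj (2*n - 2*t - 1) = n^2 - t*n - n div (t + 1)"
proof -
  have n6: "n \<ge> 6" and t1: "1 \<le> t" using assms by simp_all
  have tn: "t + 3 \<le> n" using assms by simp
  let ?W = "{S. weak_k_resolving (KK_V n) KK_adj (2*n - 2*t - 1) S}"
  have "?W \<subseteq> Pow (KK_V n)" by (auto simp: weak_k_resolving_def)
  then have "finite ?W" using finite_KK finite_subset by blast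
  then have fin: "finite (card ` ?W)" by simp
  have mem: "n^2 - t*n - n div (t + 1) \<in> card ` ?W"
    using S0_resolving[OF n6 t1 tn] card_S0[OF n6 t1 tn] by (metis (mono_tags, lifting) image_eqI mem_Collect_eq)
  have lb: "n^2 - t*n - n div (t + 1) \<le> y" if hy: "y \<in> card ` ?W" for y
  proof -
    obtain S where S: "weak_k_resolving (KK_V n) KK_adj (2*n - 2*t - 1) S" "y = card S" using hy by blast
    have "n*n \<le> card S + (n*t + n div (t+1))" by (rule lower[OF n6 t1 tn S(1)])
    then show ?thesis using S(2) by (simp add: power2_eq_square mult.commute)
  qed
  show ?thesis unfolding wdim_def
    by (rule Min_eqI[OF fin lb mem])
qed

end
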